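(* Consider the $k$-item $k$-bidder environment (any set of at most $k$ bidders may be allocated; there are $k$ real bidders) in which the auctioneer communicates with bidders through private channels, as described in the context, and real bidder values are drawn i.i.d. from the exponential distribution with mean $1$. Then there exists a sufficiently large $k$ such that the Deferred-Revelation Auction (DRA) is not credible for a collateral equal to the monopoly reserve $1$.
   Context: Bidders are quasi-linear with independent values; the exponential distribution with mean $1$ has CDF $1-e^{-t}$, virtual value $v-1$, monopoly reserve $1$. The DRA: every participant (real bidders and any fake bids fabricated by the auctioneer) commits, via a perfectly hiding, perfectly binding, non-malleable commitment scheme, to an identifier and a bid and deposits collateral $f$; the committed bids are later revealed or concealed, and collateral of concealed bids is burnt; then, among revealed bids, the feasible set maximizing the sum of (reported) virtual values is allocated (lexicographic tie-breaking) and each allocated bidder pays its critical bid. Private communication model: there is no public ledger; bidders learn about other bids only through messages from the auctioneer. The auctioneer may show different sets of committed bids to different bidders, may trigger the phases separately for each bidder (e.g. learn some bidders' revealed bids before acting toward others), and may conceal a fake bid from some bidders but reveal it to others; the auctioneer can provably burn the collateral of a concealed fake bid, which costs it $f$ once per fake bid regardless of how many bidders it was shown to. Each bidder's outcome is computed from the bids it has been shown, and the set of real bidders allocated must be feasible. The auctioneer's revenue is real bidders' payments minus burnt collateral. The DRA is credible for collateral $f$ if, when real bidders bid truthfully, the auctioneer maximizes expected revenue by fabricating no bids and behaving honestly. *)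

theory Defs
  imports "HOL-Probability.Probability"
begin

text \<open>Reported virtual value for the exponential distribution with mean 1.\<close>
definition vvirt :: "real \<Rightarrow> real" where
  "vvirt b = b - 1"

definition dra_optimal :: "nat \<Rightarrow> 'a set \<Rightarrow> ('a \<Rightarrow> real) \<Rightarrow> 'a set \<Rightarrow> bool" where
  "dra_optimal k P b A \<longleftrightarrow> A \<subseteq> P \<and> card A \<le> k \<and>
     (\<forall>B. B \<subseteq> P \<and> card B \<le> k \<longrightarrow> (\<Sum>x\<in>B. vvirt (b x)) \<le> (\<Sum>x\<in>A. vvirt (b x)))"

definition dra_alloc :: "nat \<Rightarrow> 'a::linorder set \<Rightarrow> ('a \<Rightarrow> real) \<Rightarrow> 'a set" where
  "dra_alloc k P b = (THE A. dra_optimal k P b A \<and>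
      (\<forall>B. dra_optimal k P b B \<and> B \<noteq> A \<longrightarrow> Min ((A - B) \<union> (B - A)) \<in> A))"

definition dra_critical :: "nat \<Rightarrow> 'a::linorder set \<Rightarrow> ('a \<Rightarrow> real) \<Rightarrow> 'a \<Rightarrow> real" where
  "dra_critical k P b i = Inf {x. i \<in> dra_alloc k P (b(i := x))}"

definition dra_payment :: "nat \<Rightarrow> 'a::linorder set \<Rightarrow> ('a \<Rightarrow> real) \<Rightarrow> 'a \<Rightarrow> real" where
  "dra_payment k P b i = (if i \<in> dra_alloc k P b then dra_critical k P b i else 0)"

text \<open>A (deterministic) auctioneer strategy in the private communication model,
  as functions of the real bidders' value profile v (real bidders are 0..<k).
  - au_order v: order in which the auctioneer obtains the bidders' revealed bids;
  - au_realshown v i: real bidders whose commitments are shown to bidder i;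
  - au_fakeshown v i: fake bids (identified by nat) whose commitments are shown to i;
  - au_fakebid v j: committed bid of fake j;
  - au_reveal v i j: whether fake j is revealed to bidder i (otherwise concealed).\<close>
record auctioneer =
  au_order :: "(nat \<Rightarrow> real) \<Rightarrow> nat list"
  au_realshown :: "(nat \<Rightarrow> real) \<Rightarrow> nat \<Rightarrow> nat set"
  au_fakeshown :: "(nat \<Rightarrow> real) \<Rightarrow> nat \<Rightarrow> nat set"
  au_fakebid :: "(nat \<Rightarrow> real) \<Rightarrow> nat \<Rightarrow> real"
  au_reveal :: "(nat \<Rightarrow> real) \<Rightarrow> nat \<Rightarrow> nat \<Rightarrow> bool"

text \<open>Bidder i's view: participant identifiers are nat, real bidder i is i,
  fake j is k + j. The revealed bids bidder i is shown.\<close>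
definition view_set :: "nat \<Rightarrow> auctioneer \<Rightarrow> (nat \<Rightarrow> real) \<Rightarrow> nat \<Rightarrow> nat set" where
  "view_set k s v i = insert i (au_realshown s v i) \<union>
     (\<lambda>j. k + j) ` {j \<in> au_fakeshown s v i. au_reveal s v i j}"

definition view_bid :: "nat \<Rightarrow> auctioneer \<Rightarrow> (nat \<Rightarrow> real) \<Rightarrow> nat \<Rightarrow> real" where
  "view_bid k s v p = (if p < k then v p else au_fakebid s v (p - k))"

definition burnt_fakes :: "nat \<Rightarrow> auctioneer \<Rightarrow> (nat \<Rightarrow> real) \<Rightarrow> nat set" where
  "burnt_fakes k s v = {j. \<exists>i<k. j \<in> au_fakeshown s v i \<and> \<not> au_reveal s v i j}"

text \<open>Admissible strategies: the bidder processed at step t, together with all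
  commitments shown to it (and the committed values of the fakes among them),
  may depend only on the revealed values of the bidders processed before it;
  the reveal/conceal decisions are unrestricted.\<close>
definition au_valid :: "nat \<Rightarrow> auctioneer \<Rightarrow> bool" where
  "au_valid k s \<longleftrightarrow>
     (\<forall>v. distinct (au_order s v) \<and> set (au_order s v) = {..<k} \<and>
        (\<forall>i<k. au_realshown s v i \<subseteq> {..<k} - {i} \<and> finite (au_fakeshown s v i)) \<and>
        card {i. i < k \<and> i \<in> dra_alloc k (view_set k s v i) (view_bid k s v)} \<le> k) \<and>
     (\<forall>v v' t. t < k \<longrightarrow> (\<forall>j\<in>set (take t (au_order s v)). v j = v' j) \<longrightarrow>
        (let i = au_order s v ! t in
           take (Suc t) (au_order s v') = take (Suc t) (au_order s v) \<and>
           au_realshown s v' i = au_realshown s v i \<and>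
           au_fakeshown s v' i = au_fakeshown s v i \<and>
           (\<forall>j\<in>au_fakeshown s v i. au_fakebid s v' j = au_fakebid s v j)))"

definition au_honest :: "nat \<Rightarrow> auctioneer" where
  "au_honest k = \<lparr> au_order = (\<lambda>v. [0..<k]), au_realshown = (\<lambda>v i. {..<k} - {i}),
     au_fakeshown = (\<lambda>v i. {}), au_fakebid = (\<lambda>v j. 0), au_reveal = (\<lambda>v i j. True) \<rparr>"

definition dra_revenue :: "nat \<Rightarrow> real \<Rightarrow> auctioneer \<Rightarrow> (nat \<Rightarrow> real) \<Rightarrow> real" where
  "dra_revenue k f s v =
     (\<Sum>i<k. dra_payment k (view_set k s v i) (view_bid k s v) i) - f * real (card (burnt_fakes k s v))"

definition value_measure :: "nat \<Rightarrow> (nat \<Rightarrow> real) measure" where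
  "value_measure k = PiM {..<k} (\<lambda>_. density lborel (exponential_density 1))"

definition dra_credible :: "nat \<Rightarrow> real \<Rightarrow> bool" where
  "dra_credible k f \<longleftrightarrow>
     (\<forall>s. au_valid k s \<longrightarrow> integrable (value_measure k) (dra_revenue k f s) \<longrightarrow>
        (\<integral>v. dra_revenue k f s v \<partial>value_measure k)
          \<le> (\<integral>v. dra_revenue k f (au_honest k) v \<partial>value_measure k))"

end

theory Submission
  imports Defs
begin


lemma alloc_unique:
  assumes fin: "finite P" and opt: "dra_optimal k P b A"
    and tie: "\<forall>B. dra_optimal k P b B \<and> B \<noteq> A \<longrightarrow> Min ((A - B) \<union> (B - A)) \<in> A"
  shows "dra_alloc k P b = A"
  unfolding dra_alloc_def
proof (rule the_equality)
  show "dra_optimal k P b A \<and> (\<forall>B. dra_optimal k P b B \<and> B \<noteq> A \<longrightarrow> Min ((A - B) \<union> (B - A)) \<in> A)"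
    using opt tie by blast
next
  fix A' assume H: "dra_optimal k P b A' \<and> (\<forall>B. dra_optimal k P b B \<and> B \<noteq> A' \<longrightarrow> Min ((A' - B) \<union> (B - A')) \<in> A')"
  show "A' = A"
  proof (rule ccontr)
    assume ne: "A' \<noteq> A"
    let ?S = "(A - A') \<union> (A' - A)"
    have m1: "Min ?S \<in> A" using tie H ne by blast
    have "Min ((A' - A) \<union> (A - A')) \<in> A'" using H opt ne by blast
    then have m2: "Min ?S \<in> A'" by (simp add: Un_commute)
    have "A \<subseteq> P" "A' \<subseteq> P" using opt H by (auto simp: dra_optimal_def)
    then have "finite ?S" using fin by (meson finite_Diff finite_UnI finite_subset)
    moreover have "?S \<noteq> {}" using ne by blast
    ultimately have "Min ?S \<in> ?S" by (rule Min_in)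
    then show False using m1 m2 by blast
  qed
qed

lemma sum_vvirt_const:
  assumes "\<forall>p\<in>B. b p = 2" shows "(\<Sum>x\<in>B. vvirt (b x)) = real (card B)"
  using assms by (simp add: vvirt_def)

lemma alloc_small:
  assumes fin: "finite P" and ck: "card P \<le> k"
  shows "dra_alloc k P b = {p\<in>P. 1 \<le> b p}"
proof (rule alloc_unique[OF fin])
  let ?A = "{p\<in>P. 1 \<le> b p}"
  have key: "(\<Sum>x\<in>B. vvirt (b x)) \<le> (\<Sum>x\<in>?A. vvirt (b x)) \<and>
     (B - ?A \<noteq> {} \<longrightarrow> (\<Sum>x\<in>B. vvirt (b x)) < (\<Sum>x\<in>?A. vvirt (b x)))" if B: "B \<subseteq> P" for B
  proof -
    have fB: "finite B" using B fin finite_subset by blast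
    have fA: "finite ?A" using fin by simp
    have s1: "(\<Sum>x\<in>B. vvirt (b x)) = (\<Sum>x\<in>B \<inter> ?A. vvirt (b x)) + (\<Sum>x\<in>B - ?A. vvirt (b x))"
      using fB by (metis (no_types, lifting) Diff_Int2 Int_Diff_Un Int_absorb inf.commute sum.Int_Diff)
    have s2: "(\<Sum>x\<in>?A. vvirt (b x)) = (\<Sum>x\<in>B \<inter> ?A. vvirt (b x)) + (\<Sum>x\<in>?A - B. vvirt (b x))"
      using fA by (metis (no_types, lifting) inf.commute sum.Int_Diff)
    have n1: "(\<Sum>x\<in>?A - B. vvirt (b x)) \<ge> 0"
      by (rule sum_nonneg) (auto simp: vvirt_def)
    have n2: "(\<Sum>x\<in>B - ?A. vvirt (b x)) \<le> 0"
      by (rule sum_nonpos) (use B in \<open>auto simp: vvirt_def\<close>)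
    have n3: "(\<Sum>x\<in>B - ?A. vvirt (b x)) < 0" if "B - ?A \<noteq> {}"
    proof -
      have "(\<Sum>x\<in>B - ?A. vvirt (b x)) < (\<Sum>x\<in>B - ?A. 0)"
        by (rule sum_strict_mono) (use fB that B in \<open>auto simp: vvirt_def\<close>)
      then show ?thesis by simp
    qed
    show ?thesis using s1 s2 n1 n2 n3 by linarith
  qed
  have cA: "card ?A \<le> k" using card_mono[OF fin, of ?A] ck by auto
  show opt: "dra_optimal k P b ?A"
    unfolding dra_optimal_def using key cA by auto
  show "\<forall>B. dra_optimal k P b B \<and> B \<noteq> ?A \<longrightarrow> Min ((?A - B) \<union> (B - ?A)) \<in> ?A"
  proof (intro allI impI)
    fix B assume H: "dra_optimal k P b B \<and> B \<noteq> ?A"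
    then have BP: "B \<subseteq> P" and le: "(\<Sum>x\<in>?A. vvirt (b x)) \<le> (\<Sum>x\<in>B. vvirt (b x))"
      using cA unfolding dra_optimal_def by auto
    have "B - ?A = {}" using key[OF BP] le by linarith
    then have S: "(?A - B) \<union> (B - ?A) = ?A - B" by blast
    have "finite (?A - B)" using fin by simp
    moreover have "?A - B \<noteq> {}" using H \<open>B - ?A = {}\<close> by blast
    ultimately have "Min (?A - B) \<in> ?A - B" by (rule Min_in)
    then show "Min ((?A - B) \<union> (B - ?A)) \<in> ?A" using S by simp
  qed
qed

lemma alloc_big:
  assumes fin: "finite F" and cF: "card F = k" and k1: "1 \<le> k" and iF: "i \<notin> F"
    and F: "\<forall>p\<in>F. i < p \<and> b p = 2"
  shows "i \<in> dra_alloc k (insert i F) b \<longleftrightarrow> 2 \<le> b i"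
proof -
  let ?P = "insert i F"
  have finP: "finite ?P" using fin by simp
  have sF: "(\<Sum>x\<in>B. vvirt (b x)) = real (card B)" if "B \<subseteq> F" for B
    using F that by (intro sum_vvirt_const) auto
  have Fne: "F \<noteq> {}" using cF k1 by auto
  have splitB: "(\<Sum>x\<in>B. vvirt (b x)) = (if i \<in> B then vvirt (b i) else 0) + real (card (B - {i}))"
    if "B \<subseteq> ?P" for B
  proof -
    have fB: "finite B" using that finP finite_subset by blast
    have "B - {i} \<subseteq> F" using that by auto
    then have c: "(\<Sum>x\<in>B - {i}. vvirt (b x)) = real (card (B - {i}))" by (rule sF)
    show ?thesis
    proof (cases "i \<in> B")
      case True
      then have "(\<Sum>x\<in>B. vvirt (b x)) = vvirt (b i) + (\<Sum>x\<in>B - {i}. vvirt (b x))"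
        using fB by (simp add: sum.remove)
      then show ?thesis using c True by simp
    next
      case False
      then show ?thesis using c by simp
    qed
  qed
  have cardB: "card (B - {i}) \<le> k - (if i \<in> B then 1 else 0)" if "B \<subseteq> ?P" "card B \<le> k" for B
  proof -
    have fB: "finite B" using that finP finite_subset by blast
    show ?thesis using that fB by (auto simp: card_Diff_singleton)
  qed
  show ?thesis
  proof (cases "2 \<le> b i")
    case True
    define m where "m = Max F"
    have mF: "m \<in> F" using fin Fne m_def by simp
    let ?A = "insert i (F - {m})"
    have cA: "card ?A = k" using fin mF iF cF k1 by (simp add: card_Diff_singleton)
    have cA': "card (?A - {i}) = k - 1" using fin mF iF cF by (simp add: card_Diff_singleton)
    have sA: "(\<Sum>x\<in>?A. vvirt (b x)) = vvirt (b i) + real (k - 1)"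
      using splitB[of ?A] cA' by auto
    have vi: "vvirt (b i) \<ge> 1" using True by (simp add: vvirt_def)
    have bound: "(\<Sum>x\<in>B. vvirt (b x)) \<le> vvirt (b i) + real (k - 1)" if "B \<subseteq> ?P" "card B \<le> k" for B
    proof (cases "i \<in> B")
      case True
      then have "card (B - {i}) \<le> k - 1" using cardB[OF that] by simp
      then have "real (card (B - {i})) \<le> real (k - 1)" by linarith
      then show ?thesis using splitB[OF that(1)] True by simp
    next
      case False
      then have "card (B - {i}) \<le> k" using cardB[OF that] by simp
      then have "real (card (B - {i})) \<le> real (k - 1) + 1" using k1 by linarith
      then show ?thesis using splitB[OF that(1)] False vi by simp
    qed
    have opt: "dra_optimal k ?P b ?A"
      unfolding dra_optimal_def
    proof (intro conjI allI impI)
      fix B assume "B \<subseteq> ?P \<and> card B \<le> k"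
      then show "(\<Sum>x\<in>B. vvirt (b x)) \<le> (\<Sum>x\<in>?A. vvirt (b x))" using bound sA by simp
    qed (use cA in auto)
    have "dra_alloc k ?P b = ?A"
    proof (rule alloc_unique[OF finP opt], intro allI impI)
      fix B assume H: "dra_optimal k ?P b B \<and> B \<noteq> ?A"
      have Bo: "dra_optimal k ?P b B" using H by (rule conjunct1)
      note Bo' = Bo[unfolded dra_optimal_def]
      have BP: "B \<subseteq> ?P" using Bo' by (rule conjunct1)
      have cB: "card B \<le> k" using Bo' by (rule conjunct2[THEN conjunct1])
      have Hb: "\<forall>B'. B' \<subseteq> ?P \<and> card B' \<le> k \<longrightarrow> (\<Sum>x\<in>B'. vvirt (b x)) \<le> (\<Sum>x\<in>B. vvirt (b x))"
        using Bo' by (rule conjunct2[THEN conjunct2])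
      have AP: "?A \<subseteq> ?P" by blast
      have cA2: "card ?A \<le> k" using cA by simp
      have ge: "(\<Sum>x\<in>?A. vvirt (b x)) \<le> (\<Sum>x\<in>B. vvirt (b x))"
        using Hb AP cA2 by blast
      have fB: "finite B" using BP finP finite_subset by blast
      let ?S = "(?A - B) \<union> (B - ?A)"
      have fS: "finite ?S" using fB fin by simp
      have neS: "?S \<noteq> {}"
      proof
        assume "?S = {}"
        then have "?A - B = {}" "B - ?A = {}" by simp_all
        then have "B = ?A" by (simp only: Diff_eq_empty_iff subset_antisym)
        then show False using H by simp
      qed
      have MS: "Min ?S \<in> ?S" using fS neS by (rule Min_in)
      show "Min ?S \<in> ?A"
      proof (cases "i \<in> B")
        case False
        have "i \<in> ?S" using False by blast
        moreover have "i \<le> x" if "x \<in> ?S" for x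
        proof -
          have "x \<in> insert i F" using that BP by blast
          then show ?thesis using F by (auto intro: less_imp_le)
        qed
        ultimately have "Min ?S = i" by (intro Min_eqI[OF fS]) auto
        then show ?thesis by simp
      next
        case iB: True
        have e1: "(\<Sum>x\<in>B. vvirt (b x)) = vvirt (b i) + real (card (B - {i}))"
          using splitB[OF BP] iB by simp
        have "real (k - 1) \<le> real (card (B - {i}))" using e1 ge sA by linarith
        then have c1: "k - 1 \<le> card (B - {i})" by (simp only: of_nat_le_iff)
        have c2: "card (B - {i}) = card B - 1" using iB fB by (simp add: card_Diff_singleton)
        have c3: "card B > 0" using iB fB by (auto simp: card_gt_0_iff)
        have cBk: "card B = k" using c1 c2 c3 cB k1 by linarith
        show ?thesis
        proof (rule ccontr)
          assume nA: "Min ?S \<notin> ?A"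
          then have "Min ?S \<in> B" using MS by blast
          then have "Min ?S \<in> insert i F" using BP by blast
          moreover have "\<forall>y. y \<in> insert i F \<longrightarrow> y \<notin> ?A \<longrightarrow> y = m" by blast
          ultimately have "Min ?S = m" using nA by blast
          then have Sm: "?S \<subseteq> {m}"
          proof -
            have "x = m" if "x \<in> ?S" for x
            proof -
              have "Min ?S \<le> x" using fS that by (rule Min_le)
              moreover have "x \<in> F"
              proof -
                have "x \<in> insert i F" using that BP by blast
                moreover have "x \<noteq> i" using that iB by blast
                ultimately show ?thesis by simp
              qed
              then have "x \<le> m" unfolding m_def using fin by (intro Max_ge)
              ultimately show ?thesis using \<open>Min ?S = m\<close> by (metis order_antisym)
            qed
            then show ?thesis by blast
          qed
          have mA: "m \<notin> ?A" using iF mF by blast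
          have "?A \<subseteq> B"
          proof
            fix y assume "y \<in> ?A"
            show "y \<in> B"
            proof (rule ccontr)
              assume "y \<notin> B"
              then have "y \<in> ?S" using \<open>y \<in> ?A\<close> by blast
              then have "y = m" using Sm by blast
              then show False using mA \<open>y \<in> ?A\<close> by simp
            qed
          qed
          moreover have "m \<in> B" using \<open>Min ?S \<in> B\<close> \<open>Min ?S = m\<close> by (simp only:)
          moreover note mA
          ultimately have "insert m ?A \<subseteq> B" by blast
          then have "card (insert m ?A) \<le> card B" using fB by (intro card_mono)
          moreover have "card (insert m ?A) = k + 1"
          proof -
            have "finite ?A" using fin by simp
            then have "card (insert m ?A) = Suc (card ?A)" using \<open>m \<notin> ?A\<close> by (rule card_insert_disjoint)
            then show ?thesis using cA by simp
          qed
          ultimately show False using cBk by linarith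
        qed
      qed
    qed
    then show ?thesis using True by simp
  next
    case False
    have vi: "vvirt (b i) < 1" using False by (simp add: vvirt_def)
    have sA: "(\<Sum>x\<in>F. vvirt (b x)) = real k" using sF[of F] cF by simp
    have strict: "i \<in> B \<Longrightarrow> (\<Sum>x\<in>B. vvirt (b x)) < real k" if "B \<subseteq> ?P" "card B \<le> k" for B
    proof -
      assume iB: "i \<in> B"
      then have "card (B - {i}) \<le> k - 1" using cardB[OF that] by simp
      then have "real (card (B - {i})) \<le> real k - 1" using k1 by linarith
      then show ?thesis using splitB[OF that(1)] iB vi by simp
    qed
    have bound: "(\<Sum>x\<in>B. vvirt (b x)) \<le> real k" if "B \<subseteq> ?P" "card B \<le> k" for B
    proof (cases "i \<in> B")
      case True then show ?thesis using strict[OF that] by simp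
    next
      case False
      then have "card (B - {i}) \<le> k" using cardB[OF that] by simp
      then show ?thesis using splitB[OF that(1)] False by simp
    qed
    have opt: "dra_optimal k ?P b F"
      unfolding dra_optimal_def
    proof (intro conjI allI impI)
      fix B assume "B \<subseteq> ?P \<and> card B \<le> k"
      then show "(\<Sum>x\<in>B. vvirt (b x)) \<le> (\<Sum>x\<in>F. vvirt (b x))" using bound sA by simp
    qed (use cF in auto)
    have "dra_alloc k ?P b = F"
    proof (rule alloc_unique[OF finP opt], intro allI impI)
      fix B assume H: "dra_optimal k ?P b B \<and> B \<noteq> F"
      have Bo: "dra_optimal k ?P b B" using H by (rule conjunct1)
      note Bo' = Bo[unfolded dra_optimal_def]
      have BP: "B \<subseteq> ?P" using Bo' by (rule conjunct1)
      have cB: "card B \<le> k" using Bo' by (rule conjunct2[THEN conjunct1])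
      have Hb: "\<forall>B'. B' \<subseteq> ?P \<and> card B' \<le> k \<longrightarrow> (\<Sum>x\<in>B'. vvirt (b x)) \<le> (\<Sum>x\<in>B. vvirt (b x))"
        using Bo' by (rule conjunct2[THEN conjunct2])
      have FP: "F \<subseteq> ?P" by blast
      have cF2: "card F \<le> k" using cF by simp
      have ge: "(\<Sum>x\<in>F. vvirt (b x)) \<le> (\<Sum>x\<in>B. vvirt (b x))"
        using Hb FP cF2 by blast
      have iB: "i \<notin> B" using strict[OF BP cB] ge sA by linarith
      then have BF: "B \<subseteq> F" using BP by blast
      have "real (card B) \<ge> k" using sF[OF BF] ge sA by simp
      then have "card B \<ge> k" by simp
      then have "card B = card F" using cB cF by simp
      then have "B = F" by (rule card_subset_eq[OF fin BF])
      then show "Min ((F - B) \<union> (B - F)) \<in> F" using H by simp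
    qed
    then show ?thesis using iF False by simp
  qed
qed



abbreviation "EM \<equiv> density lborel (exponential_density (1::real))"

lemma EM_prob: "prob_space EM" by (rule prob_space_exponential_density) simp

lemma EM_measure: assumes c: "0 \<le> c" shows "measure EM {c..} = exp (- c)"
proof -
  interpret P: prob_space EM by (rule EM_prob)
  have sp: "space EM = UNIV" by simp
  have m1: "emeasure EM {..c} = ennreal (1 - exp (- c))"
    using emeasure_erlang_density[of 1 0 c] c by (simp add: erlang_CDF_0)
  have m1': "measure EM {..c} = 1 - exp (- c)"
  proof -
    have "exp (- c) \<le> 1" using c by simp
    then show ?thesis using m1 by (simp add: P.emeasure_eq_measure)
  qed
  have "measure EM {c<..} = measure EM (space EM - {..c})"
    by (rule arg_cong[where f="measure EM"]) auto
  also have "\<dots> = 1 - measure EM {..c}" by (rule P.prob_compl) simp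
  finally have m2: "measure EM {c<..} = exp (- c)" using m1' by simp
  have ae: "AE x in EM. x \<in> {c..} \<longleftrightarrow> x \<in> {c<..}"
  proof -
    have "AE x in lborel. (x::real) \<noteq> c" by (rule AE_lborel_singleton)
    then have "AE x in lborel. 0 < ennreal (exponential_density 1 x) \<longrightarrow> (x \<in> {c..} \<longleftrightarrow> x \<in> {c<..})"
      by (rule eventually_mono) auto
    then show ?thesis by (subst AE_density) simp_all
  qed
  have "emeasure EM {c..} = emeasure EM {c<..}"
    by (rule emeasure_eq_AE[OF ae]) simp_all
  then have "measure EM {c..} = measure EM {c<..}" by (simp add: P.emeasure_eq_measure)
  then show ?thesis using m2 by simp
qed

lemma comp_int:
  assumes i: "i < k" and c: "0 \<le> c"
  shows "integrable (value_measure k) (\<lambda>v. indicator {c..} (v i) :: real)"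
    and "(\<integral>v. (indicator {c..} (v i) :: real) \<partial>value_measure k) = exp (- c)"
proof -
  interpret P: prob_space EM by (rule EM_prob)
  have D: "distr (value_measure k) EM (\<lambda>\<omega>. \<omega> i) = EM"
    unfolding value_measure_def by (rule distr_PiM_component) (use i EM_prob in auto)
  have meas: "(\<lambda>\<omega>. \<omega> i) \<in> measurable (value_measure k) EM"
    unfolding value_measure_def using i by (intro measurable_component_singleton) auto
  have fm: "(indicator {c..} :: real \<Rightarrow> real) \<in> borel_measurable EM" by simp
  have ie: "integrable EM (indicator {c..} :: real \<Rightarrow> real)"
    by (simp add: integrable_indicator_iff P.emeasure_finite less_top[symmetric])
  have "integrable (distr (value_measure k) EM (\<lambda>\<omega>. \<omega> i)) (indicator {c..} :: real \<Rightarrow> real)"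
    using D ie by simp
  then show "integrable (value_measure k) (\<lambda>v. indicator {c..} (v i) :: real)"
    using integrable_distr_eq[OF meas fm] by simp
  have "(\<integral>v. (indicator {c..} (v i) :: real) \<partial>value_measure k) =
        integral\<^sup>L (distr (value_measure k) EM (\<lambda>\<omega>. \<omega> i)) (indicator {c..})"
    by (rule integral_distr[OF meas fm, symmetric])
  also have "\<dots> = measure EM {c..}" using D by simp
  also have "\<dots> = exp (- c)" by (rule EM_measure[OF c])
  finally show "(\<integral>v. (indicator {c..} (v i) :: real) \<partial>value_measure k) = exp (- c)" .
qed



lemma pay_small:
  assumes "finite P" "card P \<le> k" "i \<in> P"
  shows "dra_payment k P b i = indicator {1..} (b i)"
proof -
  have a: "dra_alloc k P b' = {p\<in>P. 1 \<le> b' p}" for b' using alloc_small[OF assms(1,2)] .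
  have "{x. i \<in> dra_alloc k P (b(i := x))} = {1..}" using assms(3) by (auto simp: a)
  then have "dra_critical k P b i = 1" unfolding dra_critical_def by simp
  then show ?thesis using assms(3) by (simp add: dra_payment_def a indicator_def)
qed

lemma pay_big:
  assumes fin: "finite F" and cF: "card F = k" and k1: "1 \<le> k" and iF: "i \<notin> F"
    and F: "\<forall>p\<in>F. i < p \<and> b p = 2"
  shows "dra_payment k (insert i F) b i = (if 2 \<le> b i then 2 else 0)"
proof -
  have a: "i \<in> dra_alloc k (insert i F) (b(i := x)) \<longleftrightarrow> 2 \<le> x" for x
  proof -
    have "\<forall>p\<in>F. i < p \<and> (b(i := x)) p = 2" using F by auto
    from alloc_big[OF fin cF k1 iF this] show ?thesis by (simp only: fun_upd_same)
  qed
  have a0: "i \<in> dra_alloc k (insert i F) b \<longleftrightarrow> 2 \<le> b i" using a[of "b i"] by simp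
  have "{x. i \<in> dra_alloc k (insert i F) (b(i := x))} = {2..}" using a by auto
  then have "dra_critical k (insert i F) b i = 2" unfolding dra_critical_def by simp
  then show ?thesis by (simp add: dra_payment_def a0)
qed

definition cheat :: "nat \<Rightarrow> auctioneer" where
  "cheat k = \<lparr> au_order = (\<lambda>v. [0..<k]), au_realshown = (\<lambda>v i. {}),
     au_fakeshown = (\<lambda>v i. {0..k}), au_fakebid = (\<lambda>v j. 2),
     au_reveal = (\<lambda>v i j. if v i < 2 then 2 \<le> j else j \<noteq> min i 1) \<rparr>"

lemma honest_rev: "dra_revenue k 1 (au_honest k) v = (\<Sum>i<k. indicator {1..} (v i))"
proof -
  have b: "burnt_fakes k (au_honest k) v = {}" by (simp add: burnt_fakes_def au_honest_def)
  have vs: "view_set k (au_honest k) v i = {..<k}" if "i < k" for i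
    using that by (auto simp: view_set_def au_honest_def)
  have p: "dra_payment k (view_set k (au_honest k) v i) (view_bid k (au_honest k) v) i = indicator {1..} (v i)"
    if "i < k" for i
    using pay_small[of "{..<k}" k i "view_bid k (au_honest k) v"] that
    by (simp add: vs view_bid_def)
  show ?thesis unfolding dra_revenue_def b using p by simp
qed

lemma cheat_burnt: assumes "2 \<le> k" shows "burnt_fakes k (cheat k) v = {0, 1}"
proof -
  have "j \<in> burnt_fakes k (cheat k) v \<longleftrightarrow> j \<in> {0,1}" for j
  proof
    assume "j \<in> burnt_fakes k (cheat k) v"
    then obtain i where "i < k" "j \<le> k" "\<not> (if v i < 2 then 2 \<le> j else j \<noteq> min i 1)"
      by (auto simp: burnt_fakes_def cheat_def)
    then show "j \<in> {0,1}" by (auto split: if_splits)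
  next
    assume j: "j \<in> {0,1}"
    then have "\<exists>i<k. j \<le> k \<and> \<not> (if v i < 2 then 2 \<le> j else j \<noteq> min i 1)"
      using assms by (intro exI[of _ j]) auto
    then show "j \<in> burnt_fakes k (cheat k) v" by (auto simp: burnt_fakes_def cheat_def)
  qed
  then show ?thesis by blast
qed

lemma cheat_pay:
  assumes k: "2 \<le> k" and i: "i < k"
  shows "dra_payment k (view_set k (cheat k) v i) (view_bid k (cheat k) v) i
     = indicator {1..} (v i) + indicator {2..} (v i)"
proof -
  let ?b = "view_bid k (cheat k) v"
  have bi: "?b i = v i" using i by (simp add: view_bid_def)
  have bf: "?b (k + j) = 2" for j by (simp add: view_bid_def cheat_def)
  show ?thesis
  proof (cases "v i < 2")
    case True
    let ?F = "(\<lambda>j. k + j) ` {j \<in> {0..k}. 2 \<le> j}"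
    have vs: "view_set k (cheat k) v i = insert i ?F"
      using True by (simp add: view_set_def cheat_def)
    have fF: "finite ?F" by simp
    have iF: "i \<notin> ?F" using i by auto
    have e: "{j \<in> {0..k}. 2 \<le> j} = {2..k}" by auto
    have c1: "card ?F = card {2..k}" unfolding e by (rule card_image) (simp add: inj_on_def)
    have cF: "card ?F = k - 1" unfolding c1 using k by simp
    have cP: "card (insert i ?F) \<le> k" using fF iF cF k by simp
    have "dra_payment k (insert i ?F) ?b i = indicator {1..} (?b i)"
      by (rule pay_small) (use fF cP in auto)
    then show ?thesis using True vs bi by (simp add: indicator_def)
  next
    case False
    let ?F = "(\<lambda>j. k + j) ` {j \<in> {0..k}. j \<noteq> min i 1}"
    have vs: "view_set k (cheat k) v i = insert i ?F"
      using False by (simp add: view_set_def cheat_def)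
    have fF: "finite ?F" by simp
    have iF: "i \<notin> ?F" using i by auto
    have e: "{j \<in> {0..k}. j \<noteq> min i 1} = {0..k} - {min i 1}" by auto
    have c1: "card ?F = card ({0..k} - {min i 1})" unfolding e by (rule card_image) (simp add: inj_on_def)
    have "card ({0..k} - {min i 1}) = k" using k by (simp add: card_Diff_singleton)
    then have cF: "card ?F = k" using c1 by simp
    have Fp: "\<forall>p\<in>?F. i < p \<and> ?b p = 2" using i bf by auto
    have "dra_payment k (insert i ?F) ?b i = (if 2 \<le> ?b i then 2 else 0)"
      by (rule pay_big[OF fF cF _ iF Fp]) (use k in simp)
    then show ?thesis using False vs bi by (simp add: indicator_def)
  qed
qed

lemma cheat_rev: assumes k: "2 \<le> k"
  shows "dra_revenue k 1 (cheat k) v = (\<Sum>i<k. indicator {1..} (v i) + indicator {2..} (v i)) - 2"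
  unfolding dra_revenue_def cheat_burnt[OF k] using cheat_pay[OF k] by simp

lemma cheat_valid: "au_valid k (cheat k)"
proof -
  have c: "card {i. i < k \<and> P i} \<le> k" for P :: "nat \<Rightarrow> bool"
    using card_mono[of "{..<k}" "{i. i < k \<and> P i}"] by auto
  show ?thesis unfolding au_valid_def by (simp add: cheat_def c atLeast0LessThan)
qed



lemma expectations:
  assumes k2: "2 \<le> k"
  shows "integrable (value_measure k) (dra_revenue k 1 (cheat k))"
    and "(\<integral>v. dra_revenue k 1 (au_honest k) v \<partial>value_measure k) = real k * exp (- 1)"
    and "(\<integral>v. dra_revenue k 1 (cheat k) v \<partial>value_measure k) = real k * (exp (- 1) + exp (- 2)) - 2"
proof -
  let ?V = "value_measure k"
  interpret V: prob_space ?V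
    unfolding value_measure_def by (rule prob_space_PiM) (use EM_prob in auto)
  have I1: "integrable ?V (\<lambda>v. indicator {1..} (v i) :: real)" if "i < k" for i
    using comp_int(1)[OF that, of 1] by simp
  have I2: "integrable ?V (\<lambda>v. indicator {2..} (v i) :: real)" if "i < k" for i
    using comp_int(1)[OF that, of 2] by simp
  have J1: "(\<integral>v. (indicator {1..} (v i) :: real) \<partial>?V) = exp (- 1)" if "i < k" for i
    using comp_int(2)[OF that, of 1] by simp
  have J2: "(\<integral>v. (indicator {2..} (v i) :: real) \<partial>?V) = exp (- 2)" if "i < k" for i
    using comp_int(2)[OF that, of 2] by simp
  have I12: "integrable ?V (\<lambda>v. (indicator {1..} (v i) :: real) + indicator {2..} (v i))" if "i < k" for i
    using I1[OF that] I2[OF that] by (rule Bochner_Integration.integrable_add)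
  have J12: "(\<integral>v. (indicator {1..} (v i) :: real) + indicator {2..} (v i) \<partial>?V) = exp (- 1) + exp (- 2)"
    if "i < k" for i
    using Bochner_Integration.integral_add[OF I1[OF that] I2[OF that]] J1[OF that] J2[OF that] by simp
  have hr: "dra_revenue k 1 (au_honest k) = (\<lambda>v. \<Sum>i<k. indicator {1..} (v i))"
    by (rule ext) (rule honest_rev)
  have cr: "dra_revenue k 1 (cheat k) = (\<lambda>v. (\<Sum>i<k. indicator {1..} (v i) + indicator {2..} (v i)) - 2)"
    by (rule ext) (rule cheat_rev[OF k2])
  have IS: "integrable ?V (\<lambda>v. \<Sum>i<k. (indicator {1..} (v i) :: real) + indicator {2..} (v i))"
    by (rule Bochner_Integration.integrable_sum) (use I12 in simp)
  have IC: "integrable ?V (\<lambda>v. 2::real)" by simp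
  show "integrable ?V (dra_revenue k 1 (cheat k))"
    unfolding cr by (rule Bochner_Integration.integrable_diff[OF IS IC])
  have "(\<integral>v. dra_revenue k 1 (au_honest k) v \<partial>?V) = (\<Sum>i<k. (\<integral>v. indicator {1..} (v i) \<partial>?V))"
    unfolding hr by (rule Bochner_Integration.integral_sum) (use I1 in simp)
  also have "\<dots> = (\<Sum>i<k. exp (- 1))" by (rule sum.cong) (simp_all add: J1)
  finally show "(\<integral>v. dra_revenue k 1 (au_honest k) v \<partial>?V) = real k * exp (- 1)" by simp
  have "(\<integral>v. dra_revenue k 1 (cheat k) v \<partial>?V) =
        (\<integral>v. (\<Sum>i<k. (indicator {1..} (v i) :: real) + indicator {2..} (v i)) \<partial>?V) - (\<integral>v. 2 \<partial>?V)"
    unfolding cr by (rule Bochner_Integration.integral_diff[OF IS IC])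
  also have "(\<integral>v. (2::real) \<partial>?V) = 2" by (simp add: V.prob_space)
  also have "(\<integral>v. (\<Sum>i<k. (indicator {1..} (v i) :: real) + indicator {2..} (v i)) \<partial>?V)
      = (\<Sum>i<k. (\<integral>v. (indicator {1..} (v i) :: real) + indicator {2..} (v i) \<partial>?V))"
    by (rule Bochner_Integration.integral_sum) (use I12 in simp)
  also have "\<dots> = (\<Sum>i<k. exp (- 1) + exp (- 2))" by (rule sum.cong) (simp_all add: J12)
  finally show "(\<integral>v. dra_revenue k 1 (cheat k) v \<partial>?V) = real k * (exp (- 1) + exp (- 2)) - 2" by simp
qed

theorem mainTheorem8:
  shows "\<exists>k::nat. \<not> dra_credible k 1"
proof
  let ?k = "20::nat"
  have k2: "2 \<le> ?k" by simp
  note E = expectations[OF k2]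
  have "exp (2::real) = exp 1 * exp 1" by (simp add: exp_add[symmetric])
  also have "\<dots> \<le> 3 * 3" using exp_le by (intro mult_mono) auto
  finally have e2: "exp (2::real) < 10" by simp
  have ee: "exp (- 2 :: real) = 1 / exp 2" by (simp add: exp_minus inverse_eq_divide)
  have "20 * (1 / exp (2::real)) > 2" using e2 by (simp add: field_simps)
  then have "20 * exp (- 2 :: real) > 2" unfolding ee .
  then have gt: "(\<integral>v. dra_revenue ?k 1 (cheat ?k) v \<partial>value_measure ?k) >
                 (\<integral>v. dra_revenue ?k 1 (au_honest ?k) v \<partial>value_measure ?k)"
    using E(2,3) by simp
  show "\<not> dra_credible ?k 1"
  proof
    assume "dra_credible ?k 1"
    then have "(\<integral>v. dra_revenue ?k 1 (cheat ?k) v \<partial>value_measure ?k) \<le>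
                 (\<integral>v. dra_revenue ?k 1 (au_honest ?k) v \<partial>value_measure ?k)"
      using cheat_valid E(1) unfolding dra_credible_def by blast
    then show False using gt by linarith
  qed
qed

end
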